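(* Let $\mathbf{u}$ be an $m$-dimensional unit vector with entries in $\mathcal{R}_{12}$ such that $\mathrm{lde}(\mathbf{u})=0$. Then for any $0\le j\le m-1$ there exists a sequence $G_1,\ldots,G_q$ of one-level operators of type $\zeta_{12}$ and two-level operators of type $X$ and $H'$ such that $G_1\cdots G_q\mathbf{u}=\mathbf{e}_j$.
   Context: $\zeta_{12}=e^{2\pi i/12}$, $\mathcal{R}_{12}$ is the smallest subring of $\mathbb{C}$ containing $1/2$ and $\zeta_{12}$, and $\mathbb{Z}[\zeta_{12}]$ the smallest subring containing $\zeta_{12}$. Let $\delta=1+i$. For a vector $\mathbf{u}$ over $\mathcal{R}_{12}$, $\mathrm{lde}(\mathbf{u})$ is the smallest $\ell\in\mathbb{N}$ such that $\delta^\ell\mathbf{u}$ has all entries in $\mathbb{Z}[\zeta_{12}]$. $\mathbf{e}_j$ is the $j$-th standard basis vector. $X=\begin{bmatrix}0&1\\1&0\end{bmatrix}$, $H'=\frac{1+i}{2}\begin{bmatrix}1&1\\1&-1\end{bmatrix}$. The one-level operator $c_{[j]}$ of type $c$ is the $m\times m$ identity with $(j,j)$ entry replaced by $c$; the two-level operator $M_{[j,j']}$ ($j<j'$) of type $M\in\mathrm{M}_2(\mathbb{C})$ is the $m\times m$ identity with entries at $(j,j),(j,j'),(j',j),(j',j')$ replaced by $M_{1,1},M_{1,2},M_{2,1},M_{2,2}$. *)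

theory Defs
  imports Complex_Main "Jordan_Normal_Form.Matrix"
begin

definition zeta12 :: complex where
  "zeta12 = cis (2 * pi / 12)"

inductive_set Zzeta12 :: "complex set" where
  Z_one: "1 \<in> Zzeta12"
| Z_zeta: "zeta12 \<in> Zzeta12"
| Z_add: "a \<in> Zzeta12 \<Longrightarrow> b \<in> Zzeta12 \<Longrightarrow> a + b \<in> Zzeta12"
| Z_neg: "a \<in> Zzeta12 \<Longrightarrow> - a \<in> Zzeta12"
| Z_mult: "a \<in> Zzeta12 \<Longrightarrow> b \<in> Zzeta12 \<Longrightarrow> a * b \<in> Zzeta12"

inductive_set R12 :: "complex set" where
  R_one: "1 \<in> R12"
| R_half: "1/2 \<in> R12"
| R_zeta: "zeta12 \<in> R12"
| R_add: "a \<in> R12 \<Longrightarrow> b \<in> R12 \<Longrightarrow> a + b \<in> R12"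
| R_neg: "a \<in> R12 \<Longrightarrow> - a \<in> R12"
| R_mult: "a \<in> R12 \<Longrightarrow> b \<in> R12 \<Longrightarrow> a * b \<in> R12"

definition delta :: complex where
  "delta = 1 + \<i>"

definition lde :: "complex vec \<Rightarrow> nat" where
  "lde u = (LEAST l. \<forall>i < dim_vec u. delta ^ l * u $ i \<in> Zzeta12)"

definition unit_vector :: "complex vec \<Rightarrow> bool" where
  "unit_vector u \<longleftrightarrow> (\<Sum>i<dim_vec u. (cmod (u $ i))\<^sup>2) = 1"

definition Xgate :: "complex mat" where
  "Xgate = mat 2 2 (\<lambda>(a,b). if a \<noteq> b then 1 else 0)"

definition Hprime :: "complex mat" where
  "Hprime = mat 2 2 (\<lambda>(a,b). (1 + \<i>) / 2 * (if a = 1 \<and> b = 1 then -1 else 1))"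

definition one_level :: "nat \<Rightarrow> complex \<Rightarrow> nat \<Rightarrow> complex mat" where
  "one_level m c j = mat m m (\<lambda>(a,b). if a = b then (if a = j then c else 1) else 0)"

definition two_level :: "nat \<Rightarrow> complex mat \<Rightarrow> nat \<Rightarrow> nat \<Rightarrow> complex mat" where
  "two_level m M j j' = mat m m (\<lambda>(a,b).
     if a = j \<and> b = j then M $$ (0,0)
     else if a = j \<and> b = j' then M $$ (0,1)
     else if a = j' \<and> b = j then M $$ (1,0)
     else if a = j' \<and> b = j' then M $$ (1,1)
     else if a = b then 1 else 0)"

definition gens :: "nat \<Rightarrow> complex mat set" where
  "gens m = {one_level m zeta12 j | j. j < m}
          \<union> {two_level m Xgate j j' | j j'. j < j' \<and> j' < m}
          \<union> {two_level m Hprime j j' | j j'. j < j' \<and> j' < m}"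

end

theory Submission
  imports Defs
begin

lemma zeta_eq: "zeta12 = Complex (sqrt 3/2) (1/2)"
proof -
  have "2 * pi / 12 = pi/6" by simp
  then show ?thesis unfolding zeta12_def by (simp add: complex_eq_iff cos_30 sin_30)
qed

lemma s3: "sqrt 3 * sqrt 3 = (3::real)" by simp

lemma z2: "zeta12^2 = Complex (1/2) (sqrt 3/2)"
  by (simp add: zeta_eq power2_eq_square complex_eq_iff field_simps)

lemma z3: "zeta12^3 = \<i>"
proof -
  have "zeta12^3 = zeta12^2 * zeta12" by (simp add: power_numeral_reduce)
  also have "\<dots> = Complex (1/2) (sqrt 3/2) * Complex (sqrt 3/2) (1/2)" by (simp only: z2, simp only: zeta_eq)
  also have "\<dots> = \<i>" by (simp add: complex_eq_iff field_simps)
  finally show ?thesis .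
qed

lemma z4: "zeta12^4 = zeta12^2 - 1"
proof -
  have "zeta12^4 = zeta12^3 * zeta12" by (simp add: power_numeral_reduce)
  also have "\<dots> = \<i> * Complex (sqrt 3/2) (1/2)" by (simp only: z3, simp only: zeta_eq)
  also have "\<dots> = Complex (1/2) (sqrt 3/2) - 1" by (simp add: complex_eq_iff)
  also have "\<dots> = zeta12^2 - 1" by (simp only: z2)
  finally show ?thesis .
qed

lemma z6: "zeta12^6 = -1"
proof -
  have "zeta12^6 = (zeta12^3)^2" by (simp flip: power_mult)
  then show ?thesis by (simp add: z3)
qed

lemma z12: "zeta12^12 = 1"
proof -
  have "zeta12^12 = (zeta12^6)^2" by (simp flip: power_mult)
  then show ?thesis by (simp add: z6)
qed

definition rep :: "int \<Rightarrow> int \<Rightarrow> int \<Rightarrow> int \<Rightarrow> complex" where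
  "rep a b c d = of_int a + of_int b * zeta12 + of_int c * zeta12^2 + of_int d * zeta12^3"

lemma rep_mult_gen0:
  fixes z a b c d e f g h :: "'a::comm_ring_1"
  assumes "z^4 = z^2 - 1"
  shows "(a + b * z + c * z^2 + d * z^3) *
         (e + f * z + g * z^2 + h * z^3) =
   (a*e - (b*h+c*g+d*f) - d*h) + (a*f+b*e - (c*h+d*g)) * z
   + (a*g+b*f+c*e + (b*h+c*g+d*f)) * z^2 + (a*h+b*g+c*f+d*e + (c*h+d*g)) * z^3"
proof -
  have "(a + b * z + c * z^2 + d * z^3) *
         (e + f * z + g * z^2 + h * z^3) =
   (a*e - (b*h+c*g+d*f) - d*h) + (a*f+b*e - (c*h+d*g)) * z
   + (a*g+b*f+c*e + (b*h+c*g+d*f)) * z^2 + (a*h+b*g+c*f+d*e + (c*h+d*g)) * z^3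
   + (z^4 - z^2 + 1) * ((b*h+c*g+d*f) + (c*h+d*g) * z + d*h*(z^2+1))"
    by (simp add: algebra_simps eval_nat_numeral)
  then show ?thesis using assms by simp
qed

lemma rep_mult: "rep a b c d * rep e f g h =
   rep (a*e - (b*h+c*g+d*f) - d*h) (a*f+b*e - (c*h+d*g))
   (a*g+b*f+c*e + (b*h+c*g+d*f)) (a*h+b*g+c*f+d*e + (c*h+d*g))"
  unfolding rep_def by (subst rep_mult_gen0[OF z4]) simp


lemma Z_rep: "x \<in> Zzeta12 \<Longrightarrow> \<exists>a b c d. x = rep a b c d"
proof (induction rule: Zzeta12.induct)
  case Z_one
  have "1 = rep 1 0 0 0" by (simp add: rep_def)
  then show ?case by blast
next
  case Z_zeta
  have "zeta12 = rep 0 1 0 0" by (simp add: rep_def)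
  then show ?case by blast
next
  case (Z_add a b)
  then obtain a1 b1 c1 d1 a2 b2 c2 d2 where "a = rep a1 b1 c1 d1" "b = rep a2 b2 c2 d2" by blast
  then have "a + b = rep (a1+a2) (b1+b2) (c1+c2) (d1+d2)" by (simp add: rep_def algebra_simps)
  then show ?case by blast
next
  case (Z_neg a)
  then obtain a1 b1 c1 d1 where "a = rep a1 b1 c1 d1" by blast
  then have "- a = rep (-a1) (-b1) (-c1) (-d1)" by (simp add: rep_def algebra_simps)
  then show ?case by blast
next
  case (Z_mult a b)
  then obtain a1 b1 c1 d1 a2 b2 c2 d2 where "a = rep a1 b1 c1 d1" "b = rep a2 b2 c2 d2" by blast
  then show ?case by (metis rep_mult)
qed

lemma i_Z: "\<i> \<in> Zzeta12"
proof -
  have "zeta12 * (zeta12 * zeta12) \<in> Zzeta12" by (intro Z_mult Z_zeta)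
  moreover have "zeta12 * (zeta12 * zeta12) = \<i>" using z3 by (simp add: power3_eq_cube mult.assoc)
  ultimately show ?thesis by simp
qed

lemma delta_Z: "delta \<in> Zzeta12"
  unfolding delta_def by (intro Z_add Z_one i_Z)

lemma delta_pow_Z: "delta ^ k \<in> Zzeta12"
  by (induction k) (auto intro: Z_one Z_mult delta_Z)

lemma R12_lde: "x \<in> R12 \<Longrightarrow> \<exists>l. delta ^ l * x \<in> Zzeta12"
proof (induction rule: R12.induct)
  case R_one
  then show ?case using Z_one by (metis power_0 mult_1)
next
  case R_half
  have "delta ^ 2 * (1/2) = \<i>" by (simp add: delta_def power2_eq_square algebra_simps)
  then show ?case using i_Z by metis
next
  case R_zeta
  then show ?case using Z_zeta by (metis power_0 mult_1)
next
  case (R_add a b)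
  then obtain l1 l2 where h: "delta ^ l1 * a \<in> Zzeta12" "delta ^ l2 * b \<in> Zzeta12" by blast
  have "delta ^ (l1 + l2) * (a + b) = delta ^ l2 * (delta ^ l1 * a) + delta ^ l1 * (delta ^ l2 * b)"
    by (simp add: power_add algebra_simps)
  moreover have "\<dots> \<in> Zzeta12" by (rule Z_add; rule Z_mult[OF delta_pow_Z]; rule h)
  ultimately show ?case by metis
next
  case (R_neg a)
  then obtain l1 where h: "delta ^ l1 * a \<in> Zzeta12" by blast
  then have "- (delta ^ l1 * a) \<in> Zzeta12" by (rule Z_neg)
  then show ?case by (metis mult_minus_right)
next
  case (R_mult a b)
  then obtain l1 l2 where h: "delta ^ l1 * a \<in> Zzeta12" "delta ^ l2 * b \<in> Zzeta12" by blast
  have "delta ^ (l1 + l2) * (a * b) = (delta ^ l1 * a) * (delta ^ l2 * b)"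
    by (simp add: power_add algebra_simps)
  moreover have "\<dots> \<in> Zzeta12" using h by (rule Z_mult)
  ultimately show ?case by metis
qed

lemma rep_complex: "rep a b c d = Complex (a + b * sqrt 3/2 + c/2) (b/2 + c * sqrt 3/2 + d)"
proof -
  have "rep a b c d = of_int a + of_int b * Complex (sqrt 3/2) (1/2) + of_int c * Complex (1/2) (sqrt 3/2) + of_int d * \<i>"
    unfolding rep_def by (simp only: z2 z3, simp only: zeta_eq)
  then show ?thesis by (simp add: complex_eq_iff)
qed

lemma rep_norm: "(cmod (rep a b c d))^2 = of_int (a^2+a*c+c^2+b^2+b*d+d^2) + of_int (a*b+b*c+c*d) * sqrt 3"
proof -
  have s: "sqrt 3 * sqrt 3 = (3::real)" by simp
  have "(cmod (rep a b c d))^2 = (a + b * sqrt 3/2 + c/2)^2 + (b/2 + c * sqrt 3/2 + d)^2"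
    by (simp add: rep_complex cmod_power2)
  also have "\<dots> = of_int (a^2+a*c+c^2+b^2+b*d+d^2) + of_int (a*b+b*c+c*d) * sqrt 3"
    by (simp add: power2_eq_square algebra_simps s)
  finally show ?thesis .
qed


lemma three_dvd_sq: "(3::nat) dvd p^2 \<Longrightarrow> 3 dvd p"
proof -
  assume h: "3 dvd p^2"
  have e: "(p mod 3 * (p mod 3)) mod 3 = 0" using h
    by (metis mod_mult_eq power2_eq_square dvd_eq_mod_eq_0)
  have "p mod 3 = 0 \<or> p mod 3 = 1 \<or> p mod 3 = 2" by arith
  then have "p mod 3 = 0" using e by auto
  then show ?thesis by presburger
qed

lemma sqrt3_descent: "(p::nat)^2 = 3*q^2 \<Longrightarrow> q = 0"
proof (induction q arbitrary: p rule: less_induct)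
  case (less q)
  show ?case
  proof (rule ccontr)
    assume q0: "q \<noteq> 0"
    have "(3::nat) dvd p^2" using less.prems by simp
    then have "3 dvd p" by (rule three_dvd_sq)
    then obtain k where k: "p = 3*k" by blast
    then have q2: "q^2 = 3*k^2" using less.prems by (simp add: power2_eq_square)
    then have "(3::nat) dvd q^2" by simp
    then have "3 dvd q" by (rule three_dvd_sq)
    then obtain r where r: "q = 3*r" by blast
    then have "k^2 = 3*r^2" using q2 by (simp add: power2_eq_square)
    moreover have "r < q" using r q0 by simp
    ultimately have "r = 0" using less.IH by blast
    then show False using r q0 by simp
  qed
qed

lemma sqrt3_irr: "of_int p + of_int q * sqrt 3 = (0::real) \<Longrightarrow> q = 0"
proof (rule ccontr)
  assume h: "of_int p + of_int q * sqrt 3 = (0::real)" and q: "q \<noteq> 0"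
  then have "(of_int p)^2 = (of_int q * sqrt 3)^2"
    by (metis add_eq_0_iff2 power2_minus)
  then have "real_of_int (p^2) = real_of_int (3 * q^2)" by (simp add: power_mult_distrib)
  then have "p^2 = 3*q^2" by linarith
  then have "int ((nat \<bar>p\<bar>)^2) = int (3 * (nat \<bar>q\<bar>)^2)"
    by (simp add: of_nat_power)
  then have "(nat \<bar>p\<bar>)^2 = 3 * (nat \<bar>q\<bar>)^2" by (rule of_nat_eq_iff[THEN iffD1])
  then have "nat \<bar>q\<bar> = 0" by (rule sqrt3_descent)
  then show False using q by simp
qed

lemma quad_nonneg: "(a::int)^2 + a*c + c^2 \<ge> 0"
proof -
  have e1: "4*(a^2 + a*c + c^2) = (2*a+c)^2 + 3*c^2" by (simp add: power2_eq_square algebra_simps)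
  have "0 \<le> 4*(a^2 + a*c + c^2)" unfolding e1 by simp
  then show ?thesis by simp
qed

lemma quad_zero: "(a::int)^2 + a*c + c^2 = 0 \<Longrightarrow> a = 0 \<and> c = 0"
proof -
  assume h: "a^2 + a*c + c^2 = 0"
  have "4*(a^2 + a*c + c^2) = (2*a+c)^2 + 3*c^2" by (simp add: power2_eq_square algebra_simps)
  then have "(2*a+c)^2 + 3*c^2 = 0" using h by simp
  moreover have "(2*a+c)^2 \<ge> 0" "c^2 \<ge> 0" by simp_all
  ultimately have "c^2 = 0" "(2*a+c)^2 = 0" by linarith+
  then show ?thesis by simp
qed

lemma quad_one: "(a::int)^2 + a*c + c^2 = 1 \<Longrightarrow>
   (a = 1 \<and> c = 0) \<or> (a = -1 \<and> c = 0) \<or> (a = 0 \<and> c = 1) \<or> (a = 0 \<and> c = -1) \<or> (a = 1 \<and> c = -1) \<or> (a = -1 \<and> c = 1)"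
proof -
  assume h: "a^2 + a*c + c^2 = 1"
  have "4*(a^2 + a*c + c^2) = (2*a+c)^2 + 3*c^2" by (simp add: power2_eq_square algebra_simps)
  then have e: "(2*a+c)^2 + 3*c^2 = 4" using h by simp
  have p1: "(2*a+c)^2 \<ge> 0" "c^2 \<ge> 0" by simp_all
  have "c^2 \<le> 1" using e p1 by linarith
  then have c: "\<bar>c\<bar> \<le> 1" by (simp add: abs_square_le_1)
  have "(2*a+c)^2 \<le> 4" using e p1 by linarith
  then have "(2*a+c)^2 \<le> 2^2" by simp
  then have "\<bar>2*a+c\<bar> \<le> 2" by (subst (asm) power2_le_iff_abs_le) simp_all
  then have "\<bar>a\<bar> \<le> 1" using c by linarith
  then have "a \<in> {-1,0,1}" "c \<in> {-1,0,1}" using c by auto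
  then show ?thesis using h by auto
qed


lemma z5: "zeta12^5 = zeta12^3 - zeta12"
proof -
  have "zeta12^5 = zeta12^1 * zeta12^4" using power_add[of zeta12 1 4] by simp
  then show ?thesis by (simp add: z4 algebra_simps power2_eq_square power3_eq_cube)
qed
lemma z7: "zeta12^7 = - zeta12"
proof -
  have "zeta12^7 = zeta12^1 * zeta12^6" using power_add[of zeta12 1 6] by simp
  then show ?thesis by (simp add: z6)
qed
lemma z8: "zeta12^8 = -(zeta12^2)"
proof -
  have "zeta12^8 = zeta12^2 * zeta12^6" by (simp flip: power_add)
  then show ?thesis by (simp add: z6)
qed
lemma z9: "zeta12^9 = -(zeta12^3)"
proof -
  have "zeta12^9 = zeta12^3 * zeta12^6" by (simp flip: power_add)
  then show ?thesis by (simp add: z6)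
qed
lemma z10: "zeta12^10 = 1 - zeta12^2"
proof -
  have "zeta12^10 = zeta12^4 * zeta12^6" by (simp flip: power_add)
  then show ?thesis by (simp add: z6 z4)
qed
lemma z11: "zeta12^11 = zeta12 - zeta12^3"
proof -
  have "zeta12^11 = zeta12^5 * zeta12^6" by (simp flip: power_add)
  then show ?thesis by (simp add: z6 z5)
qed

lemma inv_pow: "x = zeta12^k \<Longrightarrow> k \<le> 12 \<Longrightarrow> \<exists>n. zeta12^n * x = 1"
proof -
  assume "x = zeta12^k" "k \<le> 12"
  then have "zeta12^(12-k) * x = zeta12^12" by (simp flip: power_add)
  then show ?thesis using z12 by metis
qed

lemma unit_rep:
  assumes "a^2+a*c+c^2+b^2+b*d+d^2 = (1::int)"
  shows "\<exists>n. zeta12^n * rep a b c d = 1"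
proof -
  have n1: "a^2+a*c+c^2 \<ge> 0" "b^2+b*d+d^2 \<ge> 0" by (rule quad_nonneg)+
  have "(a^2+a*c+c^2 = 1 \<and> b^2+b*d+d^2 = 0) \<or> (a^2+a*c+c^2 = 0 \<and> b^2+b*d+d^2 = 1)"
    using assms n1 by linarith
  then show ?thesis
  proof
    assume h: "a^2+a*c+c^2 = 1 \<and> b^2+b*d+d^2 = 0"
    then have bd: "b = 0" "d = 0" using quad_zero by blast+
    from h have "(a = 1 \<and> c = 0) \<or> (a = -1 \<and> c = 0) \<or> (a = 0 \<and> c = 1) \<or> (a = 0 \<and> c = -1) \<or> (a = 1 \<and> c = -1) \<or> (a = -1 \<and> c = 1)"
      using quad_one by blast
    then have "\<exists>k\<le>12. rep a b c d = zeta12^k"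
    proof (elim disjE conjE)
      assume "a = 1" "c = 0" then show ?thesis using bd by (intro exI[of _ 0]) (simp add: rep_def)
    next
      assume "a = -1" "c = 0" then show ?thesis using bd by (intro exI[of _ 6]) (simp add: rep_def z6)
    next
      assume "a = 0" "c = 1" then show ?thesis using bd by (intro exI[of _ 2]) (simp add: rep_def)
    next
      assume "a = 0" "c = -1" then show ?thesis using bd by (intro exI[of _ 8]) (simp add: rep_def z8)
    next
      assume "a = 1" "c = -1" then show ?thesis using bd by (intro exI[of _ 10]) (simp add: rep_def z10)
    next
      assume "a = -1" "c = 1" then show ?thesis using bd by (intro exI[of _ 4]) (simp add: rep_def z4)
    qed
    then show ?thesis using inv_pow by blast
  next
    assume h: "a^2+a*c+c^2 = 0 \<and> b^2+b*d+d^2 = 1"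
    then have ac: "a = 0" "c = 0" using quad_zero by blast+
    from h have "(b = 1 \<and> d = 0) \<or> (b = -1 \<and> d = 0) \<or> (b = 0 \<and> d = 1) \<or> (b = 0 \<and> d = -1) \<or> (b = 1 \<and> d = -1) \<or> (b = -1 \<and> d = 1)"
      using quad_one by blast
    then have "\<exists>k\<le>12. rep a b c d = zeta12^k"
    proof (elim disjE conjE)
      assume "b = 1" "d = 0" then show ?thesis using ac by (intro exI[of _ 1]) (simp add: rep_def)
    next
      assume "b = -1" "d = 0" then show ?thesis using ac by (intro exI[of _ 7]) (simp add: rep_def z7)
    next
      assume "b = 0" "d = 1" then show ?thesis using ac by (intro exI[of _ 3]) (simp add: rep_def)
    next
      assume "b = 0" "d = -1" then show ?thesis using ac by (intro exI[of _ 9]) (simp add: rep_def z9)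
    next
      assume "b = 1" "d = -1" then show ?thesis using ac by (intro exI[of _ 11]) (simp add: rep_def z11)
    next
      assume "b = -1" "d = 1" then show ?thesis using ac by (intro exI[of _ 5]) (simp add: rep_def z5)
    qed
    then show ?thesis using inv_pow by blast
  qed
qed



definition reach :: "nat \<Rightarrow> complex vec \<Rightarrow> complex vec \<Rightarrow> bool" where
  "reach m u v \<longleftrightarrow> (\<exists>Gs. set Gs \<subseteq> gens m \<and> foldr (*) Gs (1\<^sub>m m) *\<^sub>v u = v)"

lemma gens_carrier: "G \<in> gens m \<Longrightarrow> G \<in> carrier_mat m m"
  unfolding gens_def by (elim UnE CollectE exE conjE) (simp_all add: one_level_def two_level_def)

lemma foldr_carrier: "set Gs \<subseteq> gens m \<Longrightarrow> foldr (*) Gs (1\<^sub>m m) \<in> carrier_mat m m"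
proof (induction Gs)
  case Nil
  then show ?case by simp
next
  case (Cons G Gs)
  then have G: "G \<in> carrier_mat m m" and F: "foldr (*) Gs (1\<^sub>m m) \<in> carrier_mat m m"
    using gens_carrier by auto
  show ?case using mult_carrier_mat[OF G F] by simp
qed

lemma reach_refl: "u \<in> carrier_vec m \<Longrightarrow> reach m u u"
  unfolding reach_def by (intro exI[of _ "[]"]) simp

lemma reach_step: "reach m u v \<Longrightarrow> u \<in> carrier_vec m \<Longrightarrow> G \<in> gens m \<Longrightarrow> reach m u (G *\<^sub>v v)"
proof -
  assume r: "reach m u v" and u: "u \<in> carrier_vec m" and G: "G \<in> gens m"
  then obtain Gs where Gs: "set Gs \<subseteq> gens m" "foldr (*) Gs (1\<^sub>m m) *\<^sub>v u = v"
    unfolding reach_def by blast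
  have "foldr (*) (G # Gs) (1\<^sub>m m) *\<^sub>v u = (G * foldr (*) Gs (1\<^sub>m m)) *\<^sub>v u" by simp
  also have "\<dots> = G *\<^sub>v (foldr (*) Gs (1\<^sub>m m) *\<^sub>v u)"
    by (rule assoc_mult_mat_vec[OF gens_carrier[OF G] foldr_carrier[OF Gs(1)] u])
  finally have "foldr (*) (G # Gs) (1\<^sub>m m) *\<^sub>v u = G *\<^sub>v v" using Gs(2) by simp
  moreover have "set (G # Gs) \<subseteq> gens m" using Gs G by simp
  ultimately show ?thesis unfolding reach_def by blast
qed

lemma sum_delta_vec: "t < (m::nat) \<Longrightarrow> (\<Sum>k\<in>{0..<m}. (if k = t then e else 0) * (f k :: complex)) = e * f t"
proof -
  assume t: "t < m"
  have "(\<Sum>k\<in>{0..<m}. (if k = t then e else 0) * f k) = (\<Sum>k\<in>{0..<m}. if k = t then e * f k else 0)"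
    by (rule sum.cong) auto
  also have "\<dots> = e * f t" using t by (subst sum.delta) auto
  finally show ?thesis .
qed

lemma mat_vec_delta:
  assumes A: "(A :: complex mat) \<in> carrier_mat m m" and v: "v \<in> carrier_vec m"
    and ent: "\<And>a k. a < m \<Longrightarrow> k < m \<Longrightarrow> A $$ (a,k) = (if k = s a then e a else 0)"
    and s: "\<And>a. a < m \<Longrightarrow> s a < m"
  shows "A *\<^sub>v v = vec m (\<lambda>a. e a * v $ s a)"
proof (rule eq_vecI)
  show "dim_vec (A *\<^sub>v v) = dim_vec (vec m (\<lambda>a. e a * v $ s a))" using A by simp
next
  fix a assume "a < dim_vec (vec m (\<lambda>a. e a * v $ s a))"
  then have a: "a < m" by simp
  have "(A *\<^sub>v v) $ a = (\<Sum>k\<in>{0..<m}. A $$ (a,k) * v $ k)"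
    using A v a by (simp add: scalar_prod_def)
  also have "\<dots> = (\<Sum>k\<in>{0..<m}. (if k = s a then e a else 0) * v $ k)"
    using ent a by (intro sum.cong) auto
  also have "\<dots> = e a * v $ s a" by (rule sum_delta_vec[OF s[OF a], where e = "e a" and f = "\<lambda>k. v $ k"])
  finally show "(A *\<^sub>v v) $ a = vec m (\<lambda>a. e a * v $ s a) $ a" using a by simp
qed

lemma one_level_apply:
  assumes v: "v \<in> carrier_vec m"
  shows "one_level m c i *\<^sub>v v = vec m (\<lambda>a. (if a = i then c else 1) * v $ a)"
  by (rule mat_vec_delta[OF _ v, where s = "\<lambda>a. a"]) (simp_all add: one_level_def)

lemma two_level_X_apply:
  assumes v: "v \<in> carrier_vec m" and ij: "i < j" "j < m"
  shows "two_level m Xgate i j *\<^sub>v v = vec m (\<lambda>a. 1 * v $ (if a = i then j else if a = j then i else a))"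
proof (rule mat_vec_delta[OF _ v])
  show "two_level m Xgate i j \<in> carrier_mat m m" by (simp add: two_level_def)
next
  fix a k assume ak: "a < m" "k < m"
  have X: "Xgate $$ (0,0) = 0" "Xgate $$ (0,1) = 1" "Xgate $$ (1,0) = 1" "Xgate $$ (1,1) = 0"
    by (simp_all add: Xgate_def)
  show "two_level m Xgate i j $$ (a, k) = (if k = (if a = i then j else if a = j then i else a) then 1 else 0)"
  proof -
    have e: "two_level m Xgate i j $$ (a, k) = (if a = i \<and> k = i then 0 else if a = i \<and> k = j then 1
       else if a = j \<and> k = i then 1 else if a = j \<and> k = j then 0 else if a = k then 1 else 0)"
      using ak unfolding two_level_def by (simp only: index_mat(1) case_prod_conv X)
    show ?thesis unfolding e using ij by (cases "a = i"; cases "a = j"; cases "k = i"; cases "k = j"; simp)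
  qed
next
  fix a assume "a < m" then show "(if a = i then j else if a = j then i else a) < m" using ij by simp
qed


theorem lemma7p2:
  fixes u :: "complex vec" and m j :: nat
  assumes "dim_vec u = m"
    and "\<forall>i < m. u $ i \<in> R12"
    and "unit_vector u"
    and "lde u = 0"
    and "j < m"
  shows "\<exists>Gs. set Gs \<subseteq> gens m \<and> foldr (*) Gs (1\<^sub>m m) *\<^sub>v u = unit_vec m j"
proof -
  note dimu = assms(1) and R = assms(2) and uv = assms(3) and l0 = assms(4) and jm = assms(5)
  have uc: "u \<in> carrier_vec m" by (rule carrier_vecI[OF dimu])
  have "\<forall>i<m. \<exists>l. delta ^ l * u $ i \<in> Zzeta12" proof (intro allI impI)
    fix i assume "i < m" then show "\<exists>l. delta ^ l * u $ i \<in> Zzeta12" using R by (intro R12_lde) simp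
  qed
  then obtain f where f: "\<forall>i<m. delta ^ f i * u $ i \<in> Zzeta12" by metis
  define L where "L = (\<Sum>i<m. f i)"
  have "\<forall>i<m. delta ^ L * u $ i \<in> Zzeta12"
  proof (intro allI impI)
    fix i assume i: "i < m"
    have "f i \<le> L" unfolding L_def using i by (intro member_le_sum) auto
    then have "L = (L - f i) + f i" by simp
    then have "delta ^ L = delta ^ (L - f i) * delta ^ f i" by (metis power_add)
    then have "delta ^ L * u $ i = delta ^ (L - f i) * (delta ^ f i * u $ i)"
      by (simp only: mult.assoc)
    moreover have "\<dots> \<in> Zzeta12" by (rule Z_mult[OF delta_pow_Z]) (use f i in auto)
    ultimately show "delta ^ L * u $ i \<in> Zzeta12" by metis
  qed
  then have "\<forall>i < dim_vec u. delta ^ L * u $ i \<in> Zzeta12" using dimu by simp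
  then have "\<forall>i < dim_vec u. delta ^ lde u * u $ i \<in> Zzeta12"
    unfolding lde_def by (rule LeastI)
  then have Zu: "\<forall>i<m. u $ i \<in> Zzeta12" using l0 dimu by simp
  have "\<forall>i<m. \<exists>q. u $ i = rep (fst q) (fst (snd q)) (fst (snd (snd q))) (snd (snd (snd q)))"
    using Zu Z_rep by fastforce
  then obtain Q where Q: "\<forall>i<m. u $ i = rep (fst (Q i)) (fst (snd (Q i))) (fst (snd (snd (Q i)))) (snd (snd (snd (Q i))))"
    by metis
  define cA where "cA i = fst (Q i)" for i
  define cB where "cB i = fst (snd (Q i))" for i
  define cC where "cC i = fst (snd (snd (Q i)))" for i
  define cD where "cD i = snd (snd (snd (Q i)))" for i
  have Q': "\<And>i. i < m \<Longrightarrow> u $ i = rep (cA i) (cB i) (cC i) (cD i)"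
    using Q unfolding cA_def cB_def cC_def cD_def by blast
  define AA where "AA i = (cA i)^2 + cA i * cC i + (cC i)^2 + ((cB i)^2 + cB i * cD i + (cD i)^2)" for i
  define BB where "BB i = cA i * cB i + cB i * cC i + cC i * cD i" for i
  have nrm: "\<And>i. i < m \<Longrightarrow> (cmod (u $ i))^2 = of_int (AA i) + of_int (BB i) * sqrt 3"
    using Q' rep_norm unfolding AA_def BB_def by (simp add: algebra_simps)
  have "1 = (\<Sum>i<m. (cmod (u $ i))^2)" using uv dimu unfolding unit_vector_def by simp
  also have "\<dots> = (\<Sum>i<m. of_int (AA i) + of_int (BB i) * sqrt 3)"
    using nrm by (intro sum.cong) auto
  also have "\<dots> = of_int (\<Sum>i<m. AA i) + of_int (\<Sum>i<m. BB i) * sqrt 3"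
    by (simp add: sum.distrib sum_distrib_right)
  finally have "of_int ((\<Sum>i<m. AA i) - 1) + of_int (\<Sum>i<m. BB i) * sqrt 3 = (0::real)" by simp
  then have B0: "(\<Sum>i<m. BB i) = 0" by (rule sqrt3_irr)
  have "real_of_int ((\<Sum>i<m. AA i) - 1) = 0"
    using \<open>of_int ((\<Sum>i<m. AA i) - 1) + _ = 0\<close> by (simp only: B0 of_int_0 mult_zero_left add_0_right)
  then have Asum: "(\<Sum>i<m. AA i) = 1" by (simp only: of_int_eq_0_iff)
  have Anon: "\<And>i. AA i \<ge> 0" unfolding AA_def using quad_nonneg
    by (metis add_nonneg_nonneg)
  obtain i0 where i0: "i0 < m" "AA i0 \<noteq> 0"
  proof -
    have "\<not> (\<forall>i<m. AA i = 0)"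
    proof
      assume "\<forall>i<m. AA i = 0"
      then have "(\<Sum>i<m. AA i) = 0" by (intro sum.neutral) auto
      with Asum show False by simp
    qed
    then show ?thesis using that by blast
  qed
  have Ale: "\<And>i. i < m \<Longrightarrow> AA i \<le> 1" using Asum Anon
    by (metis finite_lessThan lessThan_iff member_le_sum)
  have Ai0: "AA i0 = 1" using i0 Ale[OF i0(1)] Anon[of i0] by linarith
  have zero: "u $ i = 0" if i: "i < m" "i \<noteq> i0" for i
  proof -
    have "(\<Sum>k\<in>{i0, i}. AA k) \<le> (\<Sum>k<m. AA k)"
      using i i0 Anon by (intro sum_mono2) auto
    then have "AA i0 + AA i \<le> 1" using i Asum by simp
    then have "AA i = 0" using Ai0 Anon[of i] by linarith
    then have "(cA i)^2 + cA i * cC i + (cC i)^2 = 0" "(cB i)^2 + cB i * cD i + (cD i)^2 = 0"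
      unfolding AA_def using quad_nonneg[of "cA i" "cC i"] quad_nonneg[of "cB i" "cD i"] by linarith+
    then have "cA i = 0" "cC i = 0" "cB i = 0" "cD i = 0" using quad_zero by blast+
    then show ?thesis using Q'[OF i(1)] by (simp add: rep_def)
  qed
  define x where "x = u $ i0"
  obtain n where n: "zeta12 ^ n * x = 1"
    using unit_rep[of "cA i0" "cC i0" "cB i0" "cD i0"] Ai0 Q'[OF i0(1)] unfolding AA_def x_def
    by (auto simp: algebra_simps)
  have ueq: "u = vec m (\<lambda>a. if a = i0 then zeta12 ^ 0 * x else 0)"
    by (rule eq_vecI) (use dimu zero x_def in auto)
  have Gz: "one_level m zeta12 i0 \<in> gens m" using i0 unfolding gens_def by blast
  have rk: "reach m u (vec m (\<lambda>a. if a = i0 then zeta12 ^ k * x else 0))" for k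
  proof (induction k)
    case 0
    show ?case using reach_refl[OF uc] ueq by simp
  next
    case (Suc k)
    have "reach m u (one_level m zeta12 i0 *\<^sub>v vec m (\<lambda>a. if a = i0 then zeta12 ^ k * x else 0))"
      by (rule reach_step[OF Suc uc Gz])
    moreover have "one_level m zeta12 i0 *\<^sub>v vec m (\<lambda>a. if a = i0 then zeta12 ^ k * x else 0)
       = vec m (\<lambda>a. if a = i0 then zeta12 ^ Suc k * x else 0)"
      by (subst one_level_apply) (auto simp: mult.assoc)
    ultimately show ?case by simp
  qed
  have "vec m (\<lambda>a. if a = i0 then zeta12 ^ n * x else 0) = unit_vec m i0"
    unfolding unit_vec_def n by (rule refl)
  with rk[of n] have r1: "reach m u (unit_vec m i0)" by metis
  have "reach m u (unit_vec m j)"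
  proof (cases "i0 = j")
    case True
    then show ?thesis using r1 by simp
  next
    case False
    define p where "p = min i0 j"
    define q where "q = max i0 j"
    have pq: "p < q" "q < m" using False i0 jm unfolding p_def q_def by auto
    have G: "two_level m Xgate p q \<in> gens m" using pq unfolding gens_def by blast
    have "reach m u (two_level m Xgate p q *\<^sub>v unit_vec m i0)"
      by (rule reach_step[OF r1 uc G])
    moreover have "two_level m Xgate p q *\<^sub>v unit_vec m i0 = unit_vec m j"
    proof -
      have "two_level m Xgate p q *\<^sub>v unit_vec m i0 =
         vec m (\<lambda>a. 1 * unit_vec m i0 $ (if a = p then q else if a = q then p else a))"
        by (rule two_level_X_apply[OF _ pq]) simp
      also have "\<dots> = unit_vec m j"
      proof (rule eq_vecI)
        fix a assume "a < dim_vec (unit_vec m j :: complex vec)"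
        then have a: "a < m" by simp
        have "(if a = p then q else if a = q then p else a) < m" using a pq by auto
        then show "vec m (\<lambda>a. 1 * (unit_vec m i0 :: complex vec) $ (if a = p then q else if a = q then p else a)) $ a = (unit_vec m j :: complex vec) $ a"
          using a i0 jm False pq unfolding p_def q_def by (auto simp: min_def max_def)
      qed simp
      finally show ?thesis .
    qed
    ultimately show ?thesis by simp
  qed
  then show ?thesis unfolding reach_def .
qed

end
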